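(* Let $(J,\mathcal F)$ and $w^S_j>0$ be as in the context, and assume $w^S_j\le w^T_j$ whenever $j\in S\subset T$ with $S,T\in\mathcal F$. Let $\mathbf c$ be $\mathcal F$-admissible and let $\mathrm{AG}_2$ on input $\mathbf c$ produce $\boldsymbol\pi$, $\boldsymbol\nu$, $S_k$, $\nu^{S_k}_j$. Then for every $j\in J$, $$\nu_j=\max\{\nu^S_j: j\in S\in\{S_1,\dots,S_n\}\}.$$
   Context: $J$ finite, $|J|=n$; $\mathcal F\subseteq2^J$ with $\emptyset\in\mathcal F$, each nonempty $S\in\mathcal F$ having nonempty $\partial^-S=\{j\in S:S\setminus\{j\}\in\mathcal F\}$, each $S\in\mathcal F\ne J$ having $j\notin S$ with $S\cup\{j\}\in\mathcal F$. Coefficients $w^S_j>0$ for $j\in S\in\mathcal F$. $\mathrm{AG}_2$ on input $\mathbf c$: $S_1=J$, $\nu^{S_1}_j=c_j/w^{S_1}_j$, $\pi_1\in\arg\min\{\nu^{S_1}_j:j\in\partial^-S_1\}$, $\nu_{\pi_1}=\nu^{S_1}_{\pi_1}$; for $k=2..n$: $S_k=S_{k-1}\setminus\{\pi_{k-1}\}$, $\nu^{S_k}_j=\nu^{S_{k-1}}_j+(w^{S_{k-1}}_j/w^{S_k}_j-1)[\nu^{S_{k-1}}_j-\nu^{S_{k-1}}_{\pi_{k-1}}]$ ($j\in S_k$), $\pi_k\in\arg\min\{\nu^{S_k}_j:j\in\partial^-S_k\}$, $\nu_{\pi_k}=\nu^{S_k}_{\pi_k}$. $\mathbf c$ is $\mathcal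 F$-admissible if $\nu_{\pi_1}\le\cdots\le\nu_{\pi_n}$. *)

theory Defs
  imports Complex_Main
begin

definition dminus :: "'a set set \<Rightarrow> 'a set \<Rightarrow> 'a set" where
  "dminus F S = {j \<in> S. S - {j} \<in> F}"

definition set_system :: "'a set \<Rightarrow> 'a set set \<Rightarrow> bool" where
  "set_system J F \<longleftrightarrow> finite J \<and> F \<subseteq> Pow J \<and> {} \<in> F
     \<and> (\<forall>S\<in>F. S \<noteq> {} \<longrightarrow> dminus F S \<noteq> {})
     \<and> (\<forall>S\<in>F. S \<noteq> J \<longrightarrow> (\<exists>j\<in>J - S. insert j S \<in> F))"

definition pos_weights :: "'a set set \<Rightarrow> ('a set \<Rightarrow> 'a \<Rightarrow> real) \<Rightarrow> bool" where
  "pos_weights F w \<longleftrightarrow> (\<forall>S\<in>F. \<forall>j\<in>S. w S j > 0)"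

text \<open>A run of AG_2 on input c (ties in the argmin broken arbitrarily).
  Indices k = 1..n with n = card J.  S k is S_k, nuS k j is nu^{S_k}_j,
  \<pi> k is pi_k; nu_{pi_k} = nuS k (\<pi> k).\<close>
definition AG2_run :: "'a set \<Rightarrow> 'a set set \<Rightarrow> ('a set \<Rightarrow> 'a \<Rightarrow> real) \<Rightarrow> ('a \<Rightarrow> real)
     \<Rightarrow> (nat \<Rightarrow> 'a set) \<Rightarrow> (nat \<Rightarrow> 'a \<Rightarrow> real) \<Rightarrow> (nat \<Rightarrow> 'a) \<Rightarrow> bool" where
  "AG2_run J F w c S nuS \<pi> \<longleftrightarrow>
     S 1 = J
   \<and> (\<forall>j\<in>J. nuS 1 j = c j / w J j)
   \<and> (\<forall>k\<in>{2..card J}. S k = S (k - 1) - {\<pi> (k - 1)}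
        \<and> (\<forall>j\<in>S k. nuS k j = nuS (k - 1) j
              + (w (S (k - 1)) j / w (S k) j - 1) * (nuS (k - 1) j - nuS (k - 1) (\<pi> (k - 1)))))
   \<and> (\<forall>k\<in>{1..card J}. \<pi> k \<in> dminus F (S k)
        \<and> (\<forall>j\<in>dminus F (S k). nuS k (\<pi> k) \<le> nuS k j))"

text \<open>c is F-admissible: nu_{pi_1} <= ... <= nu_{pi_n} along the run.\<close>
definition admissible_run :: "nat \<Rightarrow> (nat \<Rightarrow> 'a \<Rightarrow> real) \<Rightarrow> (nat \<Rightarrow> 'a) \<Rightarrow> bool" where
  "admissible_run n nuS \<pi> \<longleftrightarrow> (\<forall>k\<in>{1..<n}. nuS k (\<pi> k) \<le> nuS (Suc k) (\<pi> (Suc k)))"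

end

theory Submission
  imports Defs
begin

lemma conv_step:
  fixes a b m q A :: real
  assumes "q \<ge> 1" "b = a + (q - 1) * (a - m)" "b \<le> A" "m \<le> A"
  shows "a \<le> A"
proof (cases "a \<le> m")
  case True then show ?thesis using assms by linarith
next
  case False
  then have "(q - 1) * (a - m) \<ge> 0" using assms(1) by simp
  then show ?thesis using assms by linarith
qed

lemma J_in_F:
  assumes sys: "set_system J F"
  shows "J \<in> F"
proof (rule ccontr)
  assume nJ: "J \<notin> F"
  have fin: "finite J" and sub: "F \<subseteq> Pow J" and e: "{} \<in> F"
    and ext: "\<forall>S\<in>F. S \<noteq> J \<longrightarrow> (\<exists>j\<in>J - S. insert j S \<in> F)"
    using sys unfolding set_system_def by auto
  have finF: "finite F" using sub fin by (meson finite_Pow_iff finite_subset)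
  have "F \<noteq> {}" using e by auto
  define m where "m = Max (card ` F)"
  have "m \<in> card ` F" unfolding m_def using finF \<open>F \<noteq> {}\<close> by (intro Max_in) auto
  then obtain M where M1: "M \<in> F" "card M = m" by blast
  have M2: "\<forall>T\<in>F. card T \<le> card M" unfolding M1(2) m_def using finF by auto
  note M = M1(1) M2
  have "M \<noteq> J" using M nJ by auto
  then obtain j where j: "j \<in> J - M" "insert j M \<in> F" using ext M by auto
  have "finite M" using M sub fin by (meson PowD finite_subset subsetD)
  then have "card (insert j M) = Suc (card M)" using j by simp
  then show False using M(2) j by fastforce
qed

theorem theorem4:
  fixes J :: "'a set" and F :: "'a set set" and w :: "'a set \<Rightarrow> 'a \<Rightarrow> real"
    and c :: "'a \<Rightarrow> real" and S :: "nat \<Rightarrow> 'a set" and nuS :: "nat \<Rightarrow> 'a \<Rightarrow> real"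
    and \<pi> :: "nat \<Rightarrow> 'a"
  assumes sys: "set_system J F"
    and wpos: "pos_weights F w"
    and wmono: "\<And>S' T j. S' \<in> F \<Longrightarrow> T \<in> F \<Longrightarrow> S' \<subset> T \<Longrightarrow> j \<in> S' \<Longrightarrow> w S' j \<le> w T j"
    and run: "AG2_run J F w c S nuS \<pi>"
    and adm: "admissible_run (card J) nuS \<pi>"
  shows "\<forall>j\<in>J. \<forall>k\<in>{1..card J}. \<pi> k = j \<longrightarrow>
           nuS k j = Max {nuS i j | i. i \<in> {1..card J} \<and> j \<in> S i}"
proof (intro ballI impI)
  define n where "n = card J"
  have S1: "S 1 = J" using run unfolding AG2_run_def by auto
  have step: "S (Suc i) = S i - {\<pi> i} \<and> (\<forall>j\<in>S (Suc i). nuS (Suc i) j = nuS i j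
              + (w (S i) j / w (S (Suc i)) j - 1) * (nuS i j - nuS i (\<pi> i)))"
    if "1 \<le> i" "i < n" for i
  proof -
    have A: "\<forall>k\<in>{2..card J}. S k = S (k - 1) - {\<pi> (k - 1)}
        \<and> (\<forall>j\<in>S k. nuS k j = nuS (k - 1) j
              + (w (S (k - 1)) j / w (S k) j - 1) * (nuS (k - 1) j - nuS (k - 1) (\<pi> (k - 1))))"
      using run unfolding AG2_run_def by blast
    have "Suc i \<in> {2..card J}" using that n_def by auto
    from bspec[OF A this] show ?thesis by simp
  qed
  have pim: "\<pi> i \<in> dminus F (S i) \<and> (\<forall>j\<in>dminus F (S i). nuS i (\<pi> i) \<le> nuS i j)"
    if "1 \<le> i" "i \<le> n" for i
    using run that n_def unfolding AG2_run_def by auto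
  have piS: "\<pi> i \<in> S i" if "1 \<le> i" "i \<le> n" for i
    using pim[OF that] unfolding dminus_def by auto
  have SF: "S i \<in> F" if "1 \<le> i" "i \<le> n" for i
    using that
  proof (induction i)
    case 0 then show ?case by simp
  next
    case (Suc i)
    show ?case
    proof (cases "i = 0")
      case True then show ?thesis using S1 J_in_F[OF sys] by simp
    next
      case False
      then have "S (Suc i) = S i - {\<pi> i}" using step Suc.prems by auto
      moreover have "\<pi> i \<in> dminus F (S i)" using pim False Suc.prems by auto
      ultimately show ?thesis unfolding dminus_def by auto
    qed
  qed
  have Smono: "S i' \<subseteq> S i" if "1 \<le> i" "i \<le> i'" "i' \<le> n" for i i'
    using that
  proof (induction i')
    case 0 then show ?case by simp
  next
    case (Suc i')
    show ?case
    proof (cases "i = Suc i'")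
      case True then show ?thesis by simp
    next
      case False
      then have "S (Suc i') = S i' - {\<pi> i'}" using step Suc.prems by auto
      then show ?thesis using Suc False by auto
    qed
  qed
  have admc: "nuS i (\<pi> i) \<le> nuS k (\<pi> k)" if "1 \<le> i" "i \<le> k" "k \<le> n" for i k
    using that
  proof (induction k)
    case 0 then show ?case by simp
  next
    case (Suc k)
    show ?case
    proof (cases "i = Suc k")
      case True then show ?thesis by simp
    next
      case False
      then have "k \<in> {1..<card J}" using Suc.prems n_def by auto
      then have "nuS k (\<pi> k) \<le> nuS (Suc k) (\<pi> (Suc k))" using adm unfolding admissible_run_def by auto
      then show ?thesis using Suc False by auto
    qed
  qed
  fix j k assume jJ: "j \<in> J" and k: "k \<in> {1..card J}" and pk: "\<pi> k = j"
  have k1: "1 \<le> k" "k \<le> n" using k n_def by auto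
  have jSk: "j \<in> S k" using piS[OF k1] pk by simp
  have bound: "\<forall>i. 1 \<le> i \<and> i \<le> k \<longrightarrow> nuS i j \<le> nuS k j"
  proof -
    have "\<forall>d. d \<le> k - 1 \<longrightarrow> nuS (k - d) j \<le> nuS k j"
    proof
      fix d show "d \<le> k - 1 \<longrightarrow> nuS (k - d) j \<le> nuS k j"
      proof (induction d)
        case 0 then show ?case by simp
      next
        case (Suc d)
        show ?case
        proof
          assume d: "Suc d \<le> k - 1"
          define i where "i = k - Suc d"
          have i1: "1 \<le> i" "i < n" and si: "Suc i = k - d" using d k1 i_def by auto
          have jS: "j \<in> S (Suc i)" using jSk Smono[of "Suc i" k] si k1 by auto
          have st: "S (Suc i) = S i - {\<pi> i}" using step[OF i1] by blast
          have eq: "nuS (Suc i) j = nuS i j + (w (S i) j / w (S (Suc i)) j - 1) * (nuS i j - nuS i (\<pi> i))"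
            using step[OF i1] jS by blast
          have F1: "S (Suc i) \<in> F" "S i \<in> F" using SF i1 by auto
          have psub: "S (Suc i) \<subset> S i" using st piS i1 by auto
          have wp: "w (S (Suc i)) j > 0" using wpos F1 jS unfolding pos_weights_def by auto
          have wm: "w (S (Suc i)) j \<le> w (S i) j" using wmono[OF F1 psub jS] .
          have q: "w (S i) j / w (S (Suc i)) j \<ge> 1" using wp wm by simp
          have b: "nuS (Suc i) j \<le> nuS k j" using Suc.IH d si by auto
          have m: "nuS i (\<pi> i) \<le> nuS k j" using admc[of i k] i1 k1 pk si by auto
          have "nuS i j \<le> nuS k j" using conv_step[OF q eq b m] .
          then show "nuS (k - Suc d) j \<le> nuS k j" using i_def by simp
        qed
      qed
    qed
    show ?thesis
    proof (intro allI impI)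
      fix i assume i: "1 \<le> i \<and> i \<le> k"
      then have "k - i \<le> k - 1" by linarith
      then have "nuS (k - (k - i)) j \<le> nuS k j" using \<open>\<forall>d. _\<close> by blast
      moreover have "k - (k - i) = i" using i by simp
      ultimately show "nuS i j \<le> nuS k j" by simp
    qed
  qed
  have notin: "j \<notin> S i" if "k < i" "i \<le> n" for i
  proof -
    have "S (Suc k) = S k - {\<pi> k}" using step k1 that by auto
    then show ?thesis using Smono[of "Suc k" i] that pk by auto
  qed
  let ?A = "{nuS i j | i. i \<in> {1..card J} \<and> j \<in> S i}"
  have fin: "finite ?A" by simp
  have mem: "nuS k j \<in> ?A" using k jSk by auto
  have le: "\<forall>x\<in>?A. x \<le> nuS k j"
  proof
    fix x assume "x \<in> ?A"
    then obtain i where i: "x = nuS i j" "i \<in> {1..card J}" "j \<in> S i" by auto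
    have "i \<le> k"
    proof (rule ccontr)
      assume "\<not> i \<le> k" then show False using notin[of i] i n_def by auto
    qed
    then show "x \<le> nuS k j" using bound i by auto
  qed
  show "nuS k j = Max ?A"
  proof -
    have "Max ?A = nuS k j"
      by (rule Max_eqI[OF fin]) (use le mem in auto)
    then show ?thesis by simp
  qed
qed

end
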